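(* Let $W$ be a finite set and $\mathtt{N}=\{N_1,\ldots,N_r\}$ a sequence of subsets of $W$. Then $$|K(\mathtt{N})|\simeq\begin{cases}S^{|W|-1}&\text{if }N_1\cup\cdots\cup N_r=W,\\ *&\text{otherwise},\end{cases}$$ where $S^{-1}=\emptyset$. Moreover, if $\mathtt{M}=\{M_1,\ldots,M_r\}$ is a sequence of subsets of $W$ with $M_i\subset N_i$ for all $i$ and $M_1\cup\cdots\cup M_r=W$, then the inclusion $|K(\mathtt{M})|\to|K(\mathtt{N})|$ is a homotopy equivalence.
   Context: For a sequence $\mathtt{N}=\{N_1,\ldots,N_r\}$ of subsets of a finite set $W$ (repetitions allowed), choose distinct points $a_1,\ldots,a_r\notin W$, set $\widetilde{N}_i=N_i\sqcup\{a_i\}$; $K(\mathtt{N})$ is the simplicial complex on $W\sqcup\{a_1,\ldots,a_r\}$ whose minimal non-faces are exactly $\widetilde{N}_1,\ldots,\widetilde{N}_r$ (faces: subsets containing no $\widetilde{N}_i$). $K(\mathtt{M})$ is formed with the same points $a_i$, so $K(\mathtt{M})\subset K(\mathtt{N})$ when $M_i\subset N_i$. $|L|$ denotes geometric realization. *)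

theory Defs
  imports "HOL-Analysis.Analysis"
begin

text \<open>Vertices of K(N): the points of W (tagged Inl) and the extra points a_i = Inr i, i < r,
  where r = length N. The sequence N_1..N_r is the list N.\<close>

definition Kverts :: "'w set \<Rightarrow> 'w set list \<Rightarrow> ('w + nat) set" where
  "Kverts W N = Inl ` W \<union> Inr ` {..<length N}"

definition Ntilde :: "'w set list \<Rightarrow> nat \<Rightarrow> ('w + nat) set" where
  "Ntilde N i = Inl ` (N ! i) \<union> {Inr i}"

definition Kfaces :: "'w set \<Rightarrow> 'w set list \<Rightarrow> ('w + nat) set set" where
  "Kfaces W N = {F. F \<subseteq> Kverts W N \<and> (\<forall>i<length N. \<not> Ntilde N i \<subseteq> F)}"

text \<open>Standard geometric realization of a simplicial complex with (finite) vertex set V and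
  face set K: barycentric-coordinate functions supported on a face, with the
  (product = Euclidean, since V is finite) topology.\<close>
definition realization :: "'v set \<Rightarrow> 'v set set \<Rightarrow> ('v \<Rightarrow> real) set" where
  "realization V K = {x. (\<forall>v. 0 \<le> x v) \<and> (\<forall>v. v \<notin> V \<longrightarrow> x v = 0)
                        \<and> (\<Sum>v\<in>V. x v) = 1 \<and> {v. x v \<noteq> 0} \<in> K}"

definition geom_real :: "'v set \<Rightarrow> 'v set set \<Rightarrow> ('v \<Rightarrow> real) topology" where
  "geom_real V K = subtopology (powertop_real UNIV) (realization V K)"

definition KN_space :: "'w set \<Rightarrow> 'w set list \<Rightarrow> ('w + nat \<Rightarrow> real) topology" where
  "KN_space W N = geom_real (Kverts W N) (Kfaces W N)"

definition sphere_top :: "int \<Rightarrow> (nat \<Rightarrow> real) topology" where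
  "sphere_top d = (if d < 0 then subtopology (powertop_real UNIV) {} else nsphere (nat d))"

definition homotopy_equivalence_map :: "'a topology \<Rightarrow> 'b topology \<Rightarrow> ('a \<Rightarrow> 'b) \<Rightarrow> bool" where
  "homotopy_equivalence_map X Y f \<longleftrightarrow> continuous_map X Y f \<and>
     (\<exists>g. continuous_map Y X g \<and> homotopic_with (\<lambda>h. True) X X (g \<circ> f) id
          \<and> homotopic_with (\<lambda>h. True) Y Y (f \<circ> g) id)"

end

theory Submission
  imports Defs
begin


lemma topspace_geom: "topspace (geom_real V K) = realization V K"
  by (simp add: geom_real_def)

lemma cont_into_geom:
  assumes "\<And>v. continuous_map Z euclideanreal (\<lambda>p. h p v)"
    "\<And>p. p \<in> topspace Z \<Longrightarrow> h p \<in> realization V K"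
  shows "continuous_map Z (geom_real V K) h"
  unfolding geom_real_def using assms
  by (auto simp: continuous_map_in_subtopology continuous_map_componentwise_UNIV)

lemma cont_coord: "continuous_map (geom_real V K) euclideanreal (\<lambda>x. x v)"
  unfolding geom_real_def
  by (rule continuous_map_from_subtopology) (metis UNIV_I continuous_map_product_projection)

lemma cont_coord2: "continuous_map (prod_topology Z (geom_real V K)) euclideanreal (\<lambda>p. snd p v)"
  using continuous_map_compose[OF continuous_map_snd cont_coord] by (simp add: o_def)

lemma cont_fst01: "continuous_map (prod_topology (top_of_set T) Y) euclideanreal (\<lambda>p. fst p)"
  using continuous_map_compose[OF continuous_map_fst continuous_map_from_subtopology[OF continuous_map_id]]
  by (simp add: o_def)

lemma realizationI:
  assumes "\<And>v. 0 \<le> x v" "\<And>v. v \<notin> V \<Longrightarrow> x v = 0" "sum x V = 1" "{v. x v \<noteq> 0} \<in> K"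
  shows "x \<in> realization V K"
  using assms by (auto simp: realization_def)

lemma homotopic_true_intro:
  fixes h :: "real \<times> 'a \<Rightarrow> 'b"
  assumes "continuous_map (prod_topology (top_of_set {0..1}) X) Y h"
    "\<And>x. x \<in> topspace X \<Longrightarrow> h(0,x) = f x" "\<And>x. x \<in> topspace X \<Longrightarrow> h(1,x) = g x"
  shows "homotopic_with (\<lambda>x. True) X Y f g"
  by (subst homotopic_with) (use assms in \<open>auto intro!: exI[where x=h]\<close>)

lemma sumV:
  assumes "finite W"
  shows "sum x (Kverts W N) = (\<Sum>w\<in>W. x (Inl w)) + (\<Sum>i<length N. x (Inr i))"
proof -
  have "sum x (Kverts W N) = sum x (Inl ` W) + sum x (Inr ` {..<length N})"
    unfolding Kverts_def using assms by (intro sum.union_disjoint) auto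
  also have "\<dots> = (\<Sum>w\<in>W. x (Inl w)) + (\<Sum>i<length N. x (Inr i))"
    by (simp add: sum.reindex)
  finally show ?thesis .
qed

lemma Kfaces_mono: "F \<in> Kfaces W N \<Longrightarrow> G \<subseteq> F \<Longrightarrow> G \<in> Kfaces W N"
  unfolding Kfaces_def by blast

lemma face_zero:
  assumes "x \<in> realization (Kverts W N) (Kfaces W N)" "i < length N" "x (Inr i) \<noteq> 0"
  shows "\<exists>w\<in>N!i. x (Inl w) = 0"
  using assms unfolding realization_def Kfaces_def Ntilde_def by auto

lemma Kverts_len: "length A = length B \<Longrightarrow> Kverts W A = Kverts W B"
  by (simp add: Kverts_def)

lemma finite_Kverts: "finite W \<Longrightarrow> finite (Kverts W N)"
  by (simp add: Kverts_def)

definition sA :: "nat \<Rightarrow> ('w + nat \<Rightarrow> real) \<Rightarrow> real" where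
  "sA r x = (\<Sum>i<r. x (Inr i))"

definition zM :: "'w set list \<Rightarrow> real \<Rightarrow> ('w + nat \<Rightarrow> real) \<Rightarrow> ('w + nat \<Rightarrow> real)" where
  "zM M t x v = (case v of Inl w \<Rightarrow> max (x (Inl w) - t * sA (length M) x) 0
     | Inr i \<Rightarrow> if i < length M then (1-t) * x (Inr i) + (\<Sum>w\<in>M!i. max (t * sA (length M) x - x (Inl w)) 0) else 0)"

definition HM :: "'w set \<Rightarrow> 'w set list \<Rightarrow> real \<Rightarrow> ('w + nat \<Rightarrow> real) \<Rightarrow> ('w + nat \<Rightarrow> real)" where
  "HM W M t x v = zM M t x v / sum (zM M t x) (Kverts W M)"

lemma sA_cont:
  assumes "\<And>v. continuous_map Z euclideanreal (\<lambda>p. xx p v)"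
  shows "continuous_map Z euclideanreal (\<lambda>p. sA r (xx p))"
  unfolding sA_def by (intro continuous_map_sum assms) auto

lemma zM_cont:
  assumes "continuous_map Z euclideanreal tt" "\<And>v. continuous_map Z euclideanreal (\<lambda>p. xx p v)"
  shows "continuous_map Z euclideanreal (\<lambda>p. zM M (tt p) (xx p) v)"
proof (cases v)
  case (Inl w)
  show ?thesis unfolding zM_def Inl
    by (simp, intro continuous_intros assms sA_cont)
next
  case (Inr i)
  show ?thesis
  proof (cases "i < length M")
    case True
    have "continuous_map Z euclideanreal (\<lambda>p. (1 - tt p) * xx p (Inr i) + (\<Sum>w\<in>M!i. max (tt p * sA (length M) (xx p) - xx p (Inl w)) 0))"
    proof (cases "finite (M!i)")
      case True then show ?thesis by (intro continuous_intros assms sA_cont; simp)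
    next
      case False then show ?thesis by (simp, intro continuous_intros assms sA_cont; simp)
    qed
    then show ?thesis unfolding zM_def Inr using True by simp
  qed (simp add: zM_def Inr)
qed

lemma HM_cont:
  assumes "continuous_map Z euclideanreal tt" "\<And>v. continuous_map Z euclideanreal (\<lambda>p. xx p v)"
    "\<And>p. p \<in> topspace Z \<Longrightarrow> sum (zM M (tt p) (xx p)) (Kverts W M) \<noteq> 0" "finite W"
  shows "continuous_map Z euclideanreal (\<lambda>p. HM W M (tt p) (xx p) v)"
  unfolding HM_def
  by (intro continuous_map_real_divide continuous_map_sum zM_cont assms finite_Kverts)

lemma real_facts:
  assumes "x \<in> realization V K"
  shows "\<And>v. 0 \<le> x v" "\<And>v. v \<notin> V \<Longrightarrow> x v = 0" "sum x V = 1" "{v. x v \<noteq> 0} \<in> K"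
  using assms by (auto simp: realization_def)

lemma HM_core:
  assumes fin: "finite W" and len: "length L = length M" "length L' = length M"
    and LW: "\<forall>i<length M. L!i \<subseteq> W" and MW: "\<forall>i<length M. M!i \<subseteq> W"
    and ML2: "\<forall>i<length M. M!i \<subseteq> L'!i" and LL': "t < 1 \<Longrightarrow> \<forall>i<length M. L!i \<subseteq> L'!i"
    and U: "\<Union>(set M) = W" and t: "0 \<le> t" "t \<le> 1"
    and x: "x \<in> realization (Kverts W L) (Kfaces W L)"
  shows "sum (zM M t x) (Kverts W M) > 0" "HM W M t x \<in> realization (Kverts W L') (Kfaces W L')"
proof -
  define r where "r = length M"
  define s where "s = sA r x"
  define z where "z = zM M t x"
  have VL: "Kverts W L = Kverts W M" "Kverts W L' = Kverts W M" using len Kverts_len by metis+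
  note xf = real_facts[OF x]
  have s0: "s \<ge> 0" unfolding s_def sA_def using xf(1) by (simp add: sum_nonneg)
  have zW: "z (Inl w) = max (x (Inl w) - t * s) 0" for w
    by (simp add: z_def zM_def s_def r_def)
  have zA: "z (Inr i) = (if i < r then (1-t) * x (Inr i) + (\<Sum>w\<in>M!i. max (t * s - x (Inl w)) 0) else 0)" for i
    by (simp add: z_def zM_def s_def r_def)
  have z0: "z v \<ge> 0" for v
    using t xf(1) by (cases v) (auto simp: zW zA intro!: add_nonneg_nonneg sum_nonneg)
  have zoff: "z v = 0" if "v \<notin> Kverts W M" for v
  proof (cases v)
    case (Inl w)
    then have "x v = 0" using xf(2) that VL by auto
    then show ?thesis using Inl t s0 by (simp add: zW)
  next
    case (Inr i)
    then show ?thesis using that by (auto simp: zA Kverts_def r_def)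
  qed
  have sumx: "(\<Sum>w\<in>W. x (Inl w)) + s = 1"
    using xf(3) sumV[OF fin, of x L] len by (simp add: s_def sA_def r_def)
  have sumz: "sum z (Kverts W M) = (\<Sum>w\<in>W. z (Inl w)) + (\<Sum>i<r. z (Inr i))"
    using sumV[OF fin, of z M] by (simp add: r_def)
  have Apos: "(\<Sum>i<r. z (Inr i)) \<ge> s" if "s > 0"
  proof -
    obtain i where i: "i < r" "x (Inr i) \<noteq> 0"
      using \<open>s > 0\<close> unfolding s_def sA_def by (metis less_irrefl sum.neutral lessThan_iff)
    then obtain w0 where w0: "w0 \<in> L!i" "x (Inl w0) = 0"
      using face_zero[OF x] len r_def by auto
    have "w0 \<in> W" using w0 LW i r_def by auto
    then obtain j where j: "j < r" "w0 \<in> M!j" using U r_def by (auto simp: in_set_conv_nth)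
    have finj: "finite (M!j)" using MW j fin r_def finite_subset by blast
    have cj: "(\<Sum>w\<in>M!j. max (t * s - x (Inl w)) 0) \<ge> t * s"
    proof -
      have "max (t * s - x (Inl w0)) 0 \<le> (\<Sum>w\<in>M!j. max (t * s - x (Inl w)) 0)"
        by (rule member_le_sum[OF j(2) _ finj]) simp
      then show ?thesis using w0 t s0 by simp
    qed
    have "(\<Sum>i<r. z (Inr i)) = (\<Sum>i<r. (1-t) * x (Inr i)) + (\<Sum>i<r. (\<Sum>w\<in>M!i. max (t * s - x (Inl w)) 0))"
      by (simp add: zA sum.distrib)
    also have "(\<Sum>i<r. (1-t) * x (Inr i)) = (1-t) * s"
      by (simp add: s_def sA_def sum_distrib_left)
    also have "(\<Sum>i<r. (\<Sum>w\<in>M!i. max (t * s - x (Inl w)) 0)) \<ge> (\<Sum>w\<in>M!j. max (t * s - x (Inl w)) 0)"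
      by (rule member_le_sum) (use j in \<open>auto intro: sum_nonneg\<close>)
    ultimately show ?thesis using cj by (simp add: algebra_simps)
  qed
  show Dpos: "sum (zM M t x) (Kverts W M) > 0"
  proof (cases "s = 0")
    case True
    have "(\<Sum>w\<in>W. z (Inl w)) = (\<Sum>w\<in>W. x (Inl w))"
      using xf(1) True by (intro sum.cong) (auto simp: zW)
    moreover have "(\<Sum>i<r. z (Inr i)) \<ge> 0" using z0 by (simp add: sum_nonneg)
    ultimately show ?thesis using sumz sumx True by (simp add: z_def)
  next
    case False
    then have "s > 0" using s0 by simp
    moreover have "(\<Sum>w\<in>W. z (Inl w)) \<ge> 0" using z0 by (simp add: sum_nonneg)
    ultimately show ?thesis using sumz Apos by (simp add: z_def)
  qed
  define D where "D = sum z (Kverts W M)"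
  have D: "D > 0" using Dpos by (simp add: D_def z_def)
  have H: "HM W M t x v = z v / D" for v by (simp add: HM_def z_def D_def)
  have supp: "{v. HM W M t x v \<noteq> 0} = {v. z v \<noteq> 0}" using D by (auto simp: H)
  have face: "{v. z v \<noteq> 0} \<in> Kfaces W L'"
    unfolding Kfaces_def
  proof (intro CollectI conjI allI impI)
    show "{v. z v \<noteq> 0} \<subseteq> Kverts W L'" using zoff VL by auto
    fix i assume i: "i < length L'"
    show "\<not> Ntilde L' i \<subseteq> {v. z v \<noteq> 0}"
    proof
      assume sub: "Ntilde L' i \<subseteq> {v. z v \<noteq> 0}"
      then have zi: "z (Inr i) \<noteq> 0" by (auto simp: Ntilde_def)
      have ir: "i < r" using i len r_def by simp
      show False
      proof (cases "(\<Sum>w\<in>M!i. max (t * s - x (Inl w)) 0) = 0")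
        case False
        then obtain w where w: "w \<in> M!i" "max (t * s - x (Inl w)) 0 \<noteq> 0"
          by (meson sum.neutral)
        then have "z (Inl w) = 0" by (simp add: zW)
        moreover have "Inl w \<in> Ntilde L' i" using w ML2 ir r_def by (auto simp: Ntilde_def)
        ultimately show False using sub by auto
      next
        case True
        then have "(1-t) * x (Inr i) \<noteq> 0" using zi ir by (simp add: zA)
        then have "t < 1" "x (Inr i) \<noteq> 0" using t by auto
        then obtain w where w: "w \<in> L!i" "x (Inl w) = 0"
          using face_zero[OF x] ir len r_def by auto
        then have "z (Inl w) = 0" using t s0 by (simp add: zW)
        moreover have "Inl w \<in> Ntilde L' i" using w LL'[OF \<open>t<1\<close>] ir r_def by (auto simp: Ntilde_def)
        ultimately show False using sub by auto
      qed
    qed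
  qed
  show "HM W M t x \<in> realization (Kverts W L') (Kfaces W L')"
  proof (rule realizationI)
    show "0 \<le> HM W M t x v" for v using z0 D by (simp add: H)
    show "HM W M t x v = 0" if "v \<notin> Kverts W L'" for v using zoff that VL by (simp add: H)
    show "sum (HM W M t x) (Kverts W L') = 1"
      using D VL by (simp add: H sum_divide_distrib[symmetric] D_def)
    show "{v. HM W M t x v \<noteq> 0} \<in> Kfaces W L'" using supp face by simp
  qed
qed




lemma HM_0:
  assumes fin: "finite W" and len: "length L = length M"
    and x: "x \<in> realization (Kverts W L) (Kfaces W L)"
  shows "HM W M 0 x = x"
proof -
  note xf = real_facts[OF x]
  have VL: "Kverts W L = Kverts W M" using len Kverts_len by metis
  have z: "zM M 0 x = x"
  proof
    fix v show "zM M 0 x v = x v"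
    proof (cases v)
      case (Inl w) then show ?thesis using xf(1)[of v] by (simp add: zM_def)
    next
      case (Inr i)
      show ?thesis
      proof (cases "i < length M")
        case True
        have "(\<Sum>w\<in>M!i. max (0 * sA (length M) x - x (Inl w)) 0) = 0"
          using xf(1) by (intro sum.neutral) simp
        then show ?thesis using True Inr by (simp add: zM_def)
      next
        case False
        then have "v \<notin> Kverts W M" using Inr by (auto simp: Kverts_def)
        then show ?thesis using False Inr xf(2) VL by (simp add: zM_def)
      qed
    qed
  qed
  show ?thesis using xf(3) VL by (intro ext) (simp add: HM_def z)
qed

lemma real_mono: "K \<subseteq> K' \<Longrightarrow> realization V K \<subseteq> realization V K'"
  unfolding realization_def by blast

lemma Kfaces_mono2:
  assumes "length M = length N" "\<forall>i<length N. M!i \<subseteq> N!i"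
  shows "Kfaces W M \<subseteq> Kfaces W N"
proof
  fix F assume F: "F \<in> Kfaces W M"
  have "Ntilde M i \<subseteq> Ntilde N i" if "i < length N" for i
    using assms that unfolding Ntilde_def by auto
  moreover have "F \<subseteq> Kverts W N" "\<forall>i<length M. \<not> Ntilde M i \<subseteq> F"
    using F Kverts_len[OF assms(1)] unfolding Kfaces_def by auto
  ultimately have "\<forall>i<length N. \<not> Ntilde N i \<subseteq> F"
    using assms(1) by (metis order_trans)
  with \<open>F \<subseteq> Kverts W N\<close> show "F \<in> Kfaces W N"
    unfolding Kfaces_def by blast
qed

lemma incl_equiv:
  assumes fin: "finite W" and len: "length M = length N" and MN: "\<forall>i<length N. M!i \<subseteq> N!i"
    and NW: "\<forall>i<length N. N!i \<subseteq> W" and U: "\<Union>(set M) = W"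
  shows "topspace (KN_space W M) \<subseteq> topspace (KN_space W N) \<and> homotopy_equivalence_map (KN_space W M) (KN_space W N) id"
proof -
  have VV: "Kverts W M = Kverts W N" using len Kverts_len by metis
  have MW: "\<forall>i<length M. M!i \<subseteq> W" using MN NW len by auto
  have sub: "realization (Kverts W M) (Kfaces W M) \<subseteq> realization (Kverts W N) (Kfaces W N)"
    using VV real_mono[OF Kfaces_mono2[OF len MN]] by simp
  have ts: "topspace (KN_space W M) \<subseteq> topspace (KN_space W N)"
    using sub by (simp add: KN_space_def topspace_geom)
  have cid: "continuous_map (KN_space W M) (KN_space W N) id"
    unfolding KN_space_def
  proof (rule cont_into_geom)
    fix v show "continuous_map (geom_real (Kverts W M) (Kfaces W M)) euclideanreal (\<lambda>p. id p v)"
      using cont_coord by simp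
  next
    fix p assume "p \<in> topspace (geom_real (Kverts W M) (Kfaces W M))"
    then show "id p \<in> realization (Kverts W N) (Kfaces W N)" using sub by (auto simp: topspace_geom)
  qed
  let ?rho = "HM W M 1"
  have cN: "\<forall>i<length M. N!i \<subseteq> W" "\<forall>i<length M. M!i \<subseteq> N!i" "\<forall>i<length M. M!i \<subseteq> M!i"
    using NW MN len by auto
  have rhoN: "sum (zM M 1 x) (Kverts W M) > 0 \<and> HM W M 1 x \<in> realization (Kverts W M) (Kfaces W M)"
    if "x \<in> realization (Kverts W N) (Kfaces W N)" for x
    using HM_core[OF fin len[symmetric] refl cN(1) MW cN(3) _ U _ _ that, of 1] by simp
  have crho: "continuous_map (KN_space W N) (KN_space W M) ?rho"
    unfolding KN_space_def
  proof (rule cont_into_geom)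
    fix v
    show "continuous_map (geom_real (Kverts W N) (Kfaces W N)) euclideanreal (\<lambda>p. HM W M 1 p v)"
    proof (rule HM_cont[of "geom_real (Kverts W N) (Kfaces W N)" "\<lambda>_. 1" "\<lambda>p. p" M W v, OF _ cont_coord _ fin])
      fix p assume "p \<in> topspace (geom_real (Kverts W N) (Kfaces W N))"
      then show "sum (zM M 1 p) (Kverts W M) \<noteq> 0" using rhoN by (force simp: topspace_geom)
    qed simp
  next
    fix p assume "p \<in> topspace (geom_real (Kverts W N) (Kfaces W N))"
    then show "HM W M 1 p \<in> realization (Kverts W M) (Kfaces W M)"
      using rhoN by (simp add: topspace_geom)
  qed
  have homL: "homotopic_with (\<lambda>x. True) (KN_space W L) (KN_space W L) id ?rho"
    if L: "length L = length M" "\<forall>i<length M. L!i \<subseteq> W" "\<forall>i<length M. M!i \<subseteq> L!i" for L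
  proof (rule homotopic_true_intro)
    have coreL: "sum (zM M t x) (Kverts W M) > 0 \<and> HM W M t x \<in> realization (Kverts W L) (Kfaces W L)"
      if "0 \<le> t" "t \<le> 1" "x \<in> realization (Kverts W L) (Kfaces W L)" for t x
      using HM_core[OF fin L(1) L(1) L(2) MW L(3) _ U that] by simp
    show "continuous_map (prod_topology (top_of_set {0..1::real}) (KN_space W L)) (KN_space W L) (\<lambda>p. HM W M (fst p) (snd p))"
      unfolding KN_space_def
    proof (rule cont_into_geom)
      fix v
      show "continuous_map (prod_topology (top_of_set {0..1}) (geom_real (Kverts W L) (Kfaces W L))) euclideanreal
          (\<lambda>p. HM W M (fst p) (snd p) v)"
      proof (rule HM_cont[OF cont_fst01 cont_coord2 _ fin])
        fix p assume "p \<in> topspace (prod_topology (top_of_set {0..1::real}) (geom_real (Kverts W L) (Kfaces W L)))"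
        then have "fst p \<in> {0..1}" "snd p \<in> realization (Kverts W L) (Kfaces W L)"
          by (auto simp: topspace_geom)
        then show "sum (zM M (fst p) (snd p)) (Kverts W M) \<noteq> 0" using coreL by force
      qed
    next
      fix p assume "p \<in> topspace (prod_topology (top_of_set {0..1::real}) (geom_real (Kverts W L) (Kfaces W L)))"
      then have "fst p \<in> {0..1}" "snd p \<in> realization (Kverts W L) (Kfaces W L)"
        by (auto simp: topspace_geom)
      then show "HM W M (fst p) (snd p) \<in> realization (Kverts W L) (Kfaces W L)"
        using coreL by force
    qed
    show "HM W M (fst (0, x)) (snd (0, x)) = id x" if "x \<in> topspace (KN_space W L)" for x
      using HM_0[OF fin \<open>length L = length M\<close>] that by (simp add: KN_space_def topspace_geom)
    show "HM W M (fst (1, x)) (snd (1, x)) = ?rho x" for x by simp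
  qed
  have h1: "homotopic_with (\<lambda>x. True) (KN_space W M) (KN_space W M) (?rho \<circ> id) id"
    using homotopic_with_symD[OF homL[of M]] MW by simp
  have h2: "homotopic_with (\<lambda>x. True) (KN_space W N) (KN_space W N) (id \<circ> ?rho) id"
    using homotopic_with_symD[OF homL[of N]] len cN by simp
  show ?thesis unfolding homotopy_equivalence_map_def using ts cid crho h1 h2 by blast
qed



lemma cont_into_nsphere:
  assumes "\<And>k. continuous_map Z euclideanreal (\<lambda>p. h p k)" "\<And>p. p \<in> topspace Z \<Longrightarrow> h p \<in> topspace (nsphere m)"
  shows "continuous_map Z (nsphere m) h"
  using assms unfolding nsphere
  by (auto simp: continuous_map_in_subtopology continuous_map_componentwise_UNIV)

lemma cont_Max:
  assumes "finite I" "I \<noteq> {}" "\<And>i. i \<in> I \<Longrightarrow> continuous_map Z euclideanreal (f i)"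
  shows "continuous_map Z euclideanreal (\<lambda>z. Max ((\<lambda>i. f i z) ` I))"
  using assms
proof (induction I rule: finite_ne_induct)
  case (singleton x)
  then show ?case by simp
next
  case (insert x F)
  have "continuous_map Z euclideanreal (\<lambda>z. max (f x z) (Max ((\<lambda>i. f i z) ` F)))"
    using insert by (intro continuous_map_real_max) auto
  moreover have "Max ((\<lambda>i. f i z) ` insert x F) = max (f x z) (Max ((\<lambda>i. f i z) ` F))" for z
    using insert by (simp add: Max_insert)
  ultimately show ?case by simp
qed

definition beta :: "nat \<Rightarrow> real" where "beta n = 1 / (real n + 1)"
definition nu :: "(nat \<Rightarrow> 'w) \<Rightarrow> nat \<Rightarrow> ('w + nat \<Rightarrow> real) \<Rightarrow> real" where
  "nu e n x = sqrt (\<Sum>k<n. (x (Inl (e k)) - beta n)^2)"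
definition fS :: "(nat \<Rightarrow> 'w) \<Rightarrow> nat \<Rightarrow> ('w + nat \<Rightarrow> real) \<Rightarrow> (nat \<Rightarrow> real)" where
  "fS e n x = (\<lambda>k. if k < n then (x (Inl (e k)) - beta n) / nu e n x else 0)"
definition mx :: "nat \<Rightarrow> (nat \<Rightarrow> real) \<Rightarrow> real" where
  "mx n u = max (\<Sum>k<n. u k) (Max ((\<lambda>k. - u k) ` {..<n}))"
definition gS :: "'w set \<Rightarrow> (nat \<Rightarrow> 'w) \<Rightarrow> nat \<Rightarrow> (nat \<Rightarrow> real) \<Rightarrow> ('w + nat \<Rightarrow> real)" where
  "gS W e n u = (\<lambda>v. case v of Inl w \<Rightarrow> if w \<in> W then (1 + u (inv_into {..<n} e w) / mx n u) / (real n + 1) else 0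
      | Inr i \<Rightarrow> if i = 0 then 1 - (\<Sum>k<n. (1 + u k / mx n u) / (real n + 1)) else 0)"
definition Cc :: "nat \<Rightarrow> ('w + nat \<Rightarrow> real) \<Rightarrow> ('w + nat \<Rightarrow> real)" where
  "Cc r x = (\<lambda>v. case v of Inl w \<Rightarrow> x (Inl w) | Inr i \<Rightarrow> if i = 0 then sA r x else 0)"

context
  fixes W :: "'w set" and e :: "nat \<Rightarrow> 'w" and n r :: nat
  assumes fin: "finite W" and bij: "bij_betw e {..<n} W" and npos: "n > 0" and rpos: "r > 0"
begin

lemma e_in: "k < n \<Longrightarrow> e k \<in> W"
  using bij by (auto simp: bij_betw_def)
lemma ie_in: "w \<in> W \<Longrightarrow> inv_into {..<n} e w < n"
  using bij by (metis bij_betw_def inv_into_into lessThan_iff)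
lemma e_ie: "w \<in> W \<Longrightarrow> e (inv_into {..<n} e w) = w"
  using bij by (simp add: bij_betw_inv_into_right)
lemma ie_e: "k < n \<Longrightarrow> inv_into {..<n} e (e k) = k"
  using bij by (simp add: bij_betw_inv_into_left)
lemma n_card: "card W = n"
  using bij_betw_same_card[OF bij] by simp
lemma sumW_e: "(\<Sum>k<n. h (e k)) = (\<Sum>w\<in>W. h w)"
  using sum.reindex_bij_betw[OF bij] by simp

lemma faceT_intro:
  assumes "F \<subseteq> Kverts W (replicate r W)" "\<And>i. i < r \<Longrightarrow> Inr i \<in> F \<Longrightarrow> \<exists>w\<in>W. Inl w \<notin> F"
  shows "F \<in> Kfaces W (replicate r W)"
  unfolding Kfaces_def Ntilde_def using assms by fastforce

lemma T_zero:
  assumes x: "x \<in> realization (Kverts W (replicate r W)) (Kfaces W (replicate r W))" and s: "sA r x > 0"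
  shows "\<exists>w\<in>W. x (Inl w) = 0"
proof -
  obtain i where i: "i < r" "x (Inr i) \<noteq> 0"
    using s unfolding sA_def by (metis less_irrefl sum.neutral lessThan_iff)
  then show ?thesis using face_zero[OF x, of i] by simp
qed

lemma T_sum:
  assumes x: "x \<in> realization (Kverts W (replicate r W)) (Kfaces W (replicate r W))"
  shows "(\<Sum>w\<in>W. x (Inl w)) + sA r x = 1"
  using real_facts(3)[OF x] sumV[OF fin, of x "replicate r W"] by (simp add: sA_def)

lemma beta_pos: "beta n > 0" by (simp add: beta_def)
lemma beta_eq: "1 - real n * beta n = beta n"
  by (simp add: beta_def field_simps)

lemma nu_pos:
  assumes x: "x \<in> realization (Kverts W (replicate r W)) (Kfaces W (replicate r W))"
  shows "nu e n x > 0"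
proof (rule ccontr)
  assume "\<not> nu e n x > 0"
  then have "(\<Sum>k<n. (x (Inl (e k)) - beta n)^2) = 0"
    unfolding nu_def by (metis real_sqrt_gt_zero sum_nonneg zero_le_power2 order_less_le real_sqrt_eq_zero_cancel_iff)
  then have "\<forall>k\<in>{..<n}. (x (Inl (e k)) - beta n)^2 = 0"
    by (subst sum_nonneg_eq_0_iff[symmetric]) auto
  then have xb: "x (Inl w) = beta n" if "w \<in> W" for w
    using e_ie[OF that] ie_in[OF that] by (metis lessThan_iff power_eq_0_iff right_minus_eq zero_neq_numeral)
  have "sA r x = 0"
  proof (rule ccontr)
    assume "sA r x \<noteq> 0"
    moreover have "sA r x \<ge> 0" unfolding sA_def using real_facts(1)[OF x] by (simp add: sum_nonneg)
    ultimately obtain w where "w \<in> W" "x (Inl w) = 0" using T_zero[OF x] by force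
    then show False using xb beta_pos by force
  qed
  moreover have "(\<Sum>w\<in>W. x (Inl w)) = real n * beta n"
    using xb n_card by simp
  ultimately have "real n * beta n = 1" using T_sum[OF x] by simp
  then show False using beta_eq beta_pos by (simp add: beta_def)
qed

lemma topspace_sph: "topspace (nsphere (n-1)) = {u. (\<Sum>k<n. u k ^ 2) = 1 \<and> (\<forall>k\<ge>n. u k = 0)}"
proof -
  have a: "{..n - Suc 0} = {..<n}" using npos by auto
  have b: "(k > n - Suc 0) = (k \<ge> n)" for k using npos by auto
  show ?thesis unfolding nsphere by (simp add: a b)
qed

lemma mx_ge1: "k < n \<Longrightarrow> - u k \<le> mx n u"
  unfolding mx_def by (rule max.coboundedI2, rule Max_ge) auto
lemma mx_ge2: "(\<Sum>k<n. u k) \<le> mx n u"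
  unfolding mx_def by simp
lemma mx_case: "(\<Sum>k<n. u k) < mx n u \<Longrightarrow> \<exists>k<n. - u k = mx n u"
proof -
  assume a: "(\<Sum>k<n. u k) < mx n u"
  then have "mx n u = Max ((\<lambda>k. - u k) ` {..<n})" unfolding mx_def by (simp add: max_def split: if_splits)
  moreover have "Max ((\<lambda>k. - u k) ` {..<n}) \<in> (\<lambda>k. - u k) ` {..<n}"
    using npos by (intro Max_in) auto
  ultimately show ?thesis by auto
qed
lemma mx_eqI:
  assumes "\<And>k. k < n \<Longrightarrow> - u k \<le> a" "(\<Sum>k<n. u k) \<le> a" "(\<Sum>k<n. u k) = a \<or> (\<exists>k<n. - u k = a)"
  shows "mx n u = a"
proof -
  have le: "Max ((\<lambda>k. - u k) ` {..<n}) \<le> a" using assms(1) npos by (subst Max_le_iff) auto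
  show ?thesis
  proof (cases "(\<Sum>k<n. u k) = a")
    case True then show ?thesis using le unfolding mx_def by simp
  next
    case False
    then obtain k where k: "k < n" "- u k = a" using assms(3) by auto
    then have "Max ((\<lambda>k. - u k) ` {..<n}) \<ge> a" by (metis Max_ge finite_imageI finite_lessThan imageI lessThan_iff)
    then have "Max ((\<lambda>k. - u k) ` {..<n}) = a" using le by simp
    then show ?thesis using assms(2) unfolding mx_def by simp
  qed
qed

lemma mx_pos:
  assumes u: "u \<in> topspace (nsphere (n-1))"
  shows "mx n u > 0"
proof (rule ccontr)
  assume "\<not> mx n u > 0"
  then have a: "\<And>k. k < n \<Longrightarrow> u k \<ge> 0" "(\<Sum>k<n. u k) \<le> 0"
    using mx_ge1[of _ u] mx_ge2[of u] by force+
  then have "(\<Sum>k<n. u k) = 0" by (intro order_antisym a(2) sum_nonneg) (use a(1) in auto)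
  then have "\<forall>k\<in>{..<n}. u k = 0" using a(1) by (subst sum_nonneg_eq_0_iff[symmetric]) auto
  then have "(\<Sum>k<n. u k ^ 2) = 0" by simp
  then show False using u unfolding topspace_sph by simp
qed

lemma f_in:
  assumes x: "x \<in> realization (Kverts W (replicate r W)) (Kfaces W (replicate r W))"
  shows "fS e n x \<in> topspace (nsphere (n-1))"
proof -
  have nu: "nu e n x > 0" using nu_pos[OF x] .
  have "(\<Sum>k<n. fS e n x k ^ 2) = (\<Sum>k<n. (x (Inl (e k)) - beta n)^2) / (nu e n x)^2"
    by (simp add: fS_def power_divide sum_divide_distrib)
  also have "(nu e n x)^2 = (\<Sum>k<n. (x (Inl (e k)) - beta n)^2)"
    unfolding nu_def by (simp add: sum_nonneg)
  moreover have "(\<Sum>k<n. (x (Inl (e k)) - beta n)^2) \<noteq> 0" using nu unfolding nu_def by auto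
  ultimately have "(\<Sum>k<n. fS e n x k ^ 2) = 1" by simp
  then show ?thesis unfolding topspace_sph fS_def by simp
qed

lemma g_in:
  assumes u: "u \<in> topspace (nsphere (n-1))"
  shows "gS W e n u \<in> realization (Kverts W (replicate r W)) (Kfaces W (replicate r W))"
proof -
  define m where "m = mx n u"
  have m: "m > 0" using mx_pos[OF u] by (simp add: m_def)
  have Wk: "(1 + u k / m) / (real n + 1) \<ge> 0" if "k < n" for k
  proof -
    have "- u k \<le> m" using mx_ge1[OF that] by (simp add: m_def)
    then have "u k / m \<ge> -1" using m by (simp add: field_simps)
    then show ?thesis by simp
  qed
  have sumk: "(\<Sum>k<n. (1 + u k / m) / (real n + 1)) = (real n + (\<Sum>k<n. u k) / m) / (real n + 1)"
    by (simp add: sum_divide_distrib[symmetric] sum.distrib)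
  have gL: "gS W e n u (Inl w) = (if w \<in> W then (1 + u (inv_into {..<n} e w) / m) / (real n + 1) else 0)" for w
    by (simp add: gS_def m_def)
  have gR: "gS W e n u (Inr i) = (if i = 0 then 1 - (\<Sum>k<n. (1 + u k / m) / (real n + 1)) else 0)" for i
    by (simp add: gS_def m_def)
  have g0: "gS W e n u (Inr 0) = (1 - (\<Sum>k<n. u k) / m) / (real n + 1)"
    unfolding gR sumk by (simp add: field_simps)
  have g0nn: "gS W e n u (Inr 0) \<ge> 0"
    using mx_ge2[of u] m by (simp add: g0 m_def field_simps)
  show ?thesis
  proof (rule realizationI)
    fix v show "0 \<le> gS W e n u v"
      by (cases v) (use g0nn Wk ie_in in \<open>auto simp: gL gR\<close>)
  next
    fix v assume "v \<notin> Kverts W (replicate r W)"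
    then show "gS W e n u v = 0"
      using rpos by (cases v) (auto simp: gL gR Kverts_def)
  next
    have "(\<Sum>w\<in>W. gS W e n u (Inl w)) = (\<Sum>k<n. gS W e n u (Inl (e k)))"
      using sumW_e[of "\<lambda>w. gS W e n u (Inl w)"] by simp
    also have "\<dots> = (\<Sum>k<n. (1 + u k / m) / (real n + 1))"
      by (intro sum.cong) (auto simp: gL e_in ie_e)
    finally have sW: "(\<Sum>w\<in>W. gS W e n u (Inl w)) = (\<Sum>k<n. (1 + u k / m) / (real n + 1))" .
    have sA: "(\<Sum>i<length (replicate r W). gS W e n u (Inr i)) = gS W e n u (Inr 0)"
      using rpos by (simp add: gR)
    show "sum (gS W e n u) (Kverts W (replicate r W)) = 1"
      unfolding sumV[OF fin] sA sW by (simp add: gR)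
  next
    show "{v. gS W e n u v \<noteq> 0} \<in> Kfaces W (replicate r W)"
    proof (rule faceT_intro)
      show "{v. gS W e n u v \<noteq> 0} \<subseteq> Kverts W (replicate r W)"
      proof
        fix v assume "v \<in> {v. gS W e n u v \<noteq> 0}"
        then show "v \<in> Kverts W (replicate r W)"
          using rpos by (cases v) (auto simp: gL gR Kverts_def split: if_splits)
      qed
    next
      fix i assume "i < r" "Inr i \<in> {v. gS W e n u v \<noteq> 0}"
      then have i0: "i = 0" and nz: "gS W e n u (Inr 0) \<noteq> 0" by (auto simp: gR split: if_splits)
      then have "(\<Sum>k<n. u k) < m" using mx_ge2[of u] m by (auto simp: g0 m_def)
      then obtain k where k: "k < n" "- u k = m" using mx_case by (auto simp: m_def)
      then have "u k = - m" by simp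
      then have "1 + u k / m = 0" using m by simp
      then have "gS W e n u (Inl (e k)) = 0" using k by (simp add: gL e_in ie_e)
      then show "\<exists>w\<in>W. Inl w \<notin> {v. gS W e n u v \<noteq> 0}" using e_in k by auto
    qed
  qed
qed

lemma fg:
  assumes u: "u \<in> topspace (nsphere (n-1))"
  shows "fS e n (gS W e n u) = u"
proof -
  define m where "m = mx n u"
  have m: "m > 0" using mx_pos[OF u] by (simp add: m_def)
  define c where "c = m * (real n + 1)"
  have c: "c > 0" using m by (simp add: c_def)
  have us: "(\<Sum>k<n. u k ^ 2) = 1" "\<And>k. k \<ge> n \<Longrightarrow> u k = 0" using u unfolding topspace_sph by auto
  have d: "gS W e n (u) (Inl (e k)) - beta n = u k / c" if "k < n" for k
  proof -
    have "gS W e n (u) (Inl (e k)) = (1 + u k / m) / (real n + 1)"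
      using that by (simp add: gS_def e_in ie_e m_def)
    also have "\<dots> = 1 / (real n + 1) + (u k / m) / (real n + 1)" by (simp add: add_divide_distrib)
    finally show ?thesis by (simp add: beta_def c_def)
  qed
  have "nu e n (gS W e n u) = sqrt (\<Sum>k<n. (u k / c)^2)"
    unfolding nu_def by (simp add: d)
  also have "(\<Sum>k<n. (u k / c)^2) = 1 / c^2"
    by (simp add: power_divide sum_divide_distrib[symmetric] us(1))
  also have "sqrt (1 / c^2) = 1 / c" using c by (simp add: real_sqrt_divide)
  finally have nu: "nu e n (gS W e n u) = 1 / c" .
  show ?thesis
  proof
    fix k show "fS e n (gS W e n u) k = u k"
    proof (cases "k < n")
      case True then show ?thesis using c by (simp add: fS_def d nu)
    next
      case False then show ?thesis using us(2) by (simp add: fS_def)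
    qed
  qed
qed

lemma gf_key:
  assumes x: "x \<in> realization (Kverts W (replicate r W)) (Kfaces W (replicate r W))" and k: "k < n"
  shows "(1 + fS e n x k / mx n (fS e n x)) / (real n + 1) = x (Inl (e k))"
proof -
  define v where "v = nu e n x"
  have v: "v > 0" using nu_pos[OF x] by (simp add: v_def)
  define s where "s = sA r x"
  have s0: "s \<ge> 0" unfolding s_def sA_def using real_facts(1)[OF x] by (simp add: sum_nonneg)
  have u: "fS e n x k = (x (Inl (e k)) - beta n) / v" if "k < n" for k
    using that by (simp add: fS_def v_def)
  have sum_a: "(\<Sum>k<n. x (Inl (e k)) - beta n) = beta n - s"
  proof -
    have "(\<Sum>k<n. x (Inl (e k)) - beta n) = (\<Sum>k<n. x (Inl (e k))) - real n * beta n"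
      by (simp add: sum_subtractf)
    also have "(\<Sum>k<n. x (Inl (e k))) = 1 - s" using T_sum[OF x] sumW_e[of "\<lambda>w. x (Inl w)"] by (simp add: s_def)
    finally show ?thesis using beta_eq by simp
  qed
  have sumu: "(\<Sum>k<n. fS e n x k) = (beta n - s) / v"
    by (simp add: u sum_divide_distrib[symmetric] sum_a)
  have mxv: "mx n (fS e n x) = beta n / v"
  proof (rule mx_eqI)
    fix k assume "k < n"
    then show "- fS e n x k \<le> beta n / v"
    proof -
      have "(beta n - x (Inl (e k))) / v \<le> beta n / v"
        using v real_facts(1)[OF x, of "Inl (e k)"] by (intro divide_right_mono) auto
      then show ?thesis using \<open>k < n\<close> by (simp add: u minus_divide_left)
    qed
  next
    show "(\<Sum>k<n. fS e n x k) \<le> beta n / v" using sumu s0 v by (simp add: divide_right_mono)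
  next
    show "(\<Sum>k<n. fS e n x k) = beta n / v \<or> (\<exists>k<n. - fS e n x k = beta n / v)"
    proof (cases "s = 0")
      case True then show ?thesis using sumu by simp
    next
      case False
      then have "sA r x > 0" using s0 by (simp add: s_def)
      then obtain w where w: "w \<in> W" "x (Inl w) = 0" using T_zero[OF x] by auto
      then have "- fS e n x (inv_into {..<n} e w) = beta n / v"
        using ie_in[OF w(1)] by (simp add: u e_ie)
      then show ?thesis using ie_in[OF w(1)] by blast
    qed
  qed
  have q: "fS e n x k / mx n (fS e n x) = (x (Inl (e k)) - beta n) / beta n"
    using v k by (simp add: mxv u)
  have b: "beta n > 0" by (rule beta_pos)
  have "1 + (x (Inl (e k)) - beta n) / beta n = x (Inl (e k)) / beta n"
    using b by (simp add: diff_divide_distrib)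
  also have "\<dots> = x (Inl (e k)) * (real n + 1)" by (simp add: beta_def)
  finally have "(1 + (x (Inl (e k)) - beta n) / beta n) / (real n + 1) = x (Inl (e k))"
    by (simp add: add_pos_nonneg)
  then show ?thesis by (simp add: q)
qed

lemma gf:
  assumes x: "x \<in> realization (Kverts W (replicate r W)) (Kfaces W (replicate r W))"
  shows "gS W e n (fS e n x) = Cc r x"
proof
  fix v
  show "gS W e n (fS e n x) v = Cc r x v"
  proof (cases v)
    case (Inl w)
    show ?thesis
    proof (cases "w \<in> W")
      case True
      then show ?thesis using gf_key[OF x ie_in[OF True]] by (simp add: gS_def Cc_def Inl e_ie)
    next
      case False
      then have "x v = 0" using real_facts(2)[OF x] Inl by (auto simp: Kverts_def)
      then show ?thesis using False Inl by (simp add: gS_def Cc_def)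
    qed
  next
    case (Inr i)
    have "(\<Sum>k<n. (1 + fS e n x k / mx n (fS e n x)) / (real n + 1)) = (\<Sum>k<n. x (Inl (e k)))"
      using gf_key[OF x] by (intro sum.cong) auto
    also have "\<dots> = 1 - sA r x" using T_sum[OF x] sumW_e[of "\<lambda>w. x (Inl w)"] by simp
    finally show ?thesis using Inr by (simp add: gS_def Cc_def)
  qed
qed

lemma h_in:
  assumes x: "x \<in> realization (Kverts W (replicate r W)) (Kfaces W (replicate r W))" and t: "0 \<le> t" "t \<le> 1"
  shows "(\<lambda>v. (1 - t) * Cc r x v + t * x v) \<in> realization (Kverts W (replicate r W)) (Kfaces W (replicate r W))"
proof -
  note xf = real_facts[OF x]
  have s0: "sA r x \<ge> 0" unfolding sA_def using xf(1) by (simp add: sum_nonneg)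
  have C0: "Cc r x v \<ge> 0" for v using xf(1) s0 by (cases v) (auto simp: Cc_def)
  have Coff: "Cc r x v = 0" if "v \<notin> Kverts W (replicate r W)" for v
    using that xf(2) rpos by (cases v) (auto simp: Cc_def Kverts_def)
  have Csum: "sum (Cc r x) (Kverts W (replicate r W)) = 1"
  proof -
    have "(\<Sum>i<length (replicate r W). Cc r x (Inr i)) = sA r x"
      using rpos by (simp add: Cc_def)
    moreover have "(\<Sum>w\<in>W. Cc r x (Inl w)) = (\<Sum>w\<in>W. x (Inl w))" by (simp add: Cc_def)
    ultimately show ?thesis using sumV[OF fin, of "Cc r x" "replicate r W"] T_sum[OF x] by simp
  qed
  show ?thesis
  proof (rule realizationI)
    show "0 \<le> (1 - t) * Cc r x v + t * x v" for v using C0 xf(1) t by simp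
    show "(1 - t) * Cc r x v + t * x v = 0" if "v \<notin> Kverts W (replicate r W)" for v
      using Coff[OF that] xf(2)[OF that] by simp
    show "(\<Sum>v\<in>Kverts W (replicate r W). (1 - t) * Cc r x v + t * x v) = 1"
      using Csum xf(3) by (simp add: sum.distrib sum_distrib_left[symmetric])
  next
    show "{v. (1 - t) * Cc r x v + t * x v \<noteq> 0} \<in> Kfaces W (replicate r W)"
    proof (rule faceT_intro)
      show "{v. (1 - t) * Cc r x v + t * x v \<noteq> 0} \<subseteq> Kverts W (replicate r W)"
      proof
        fix v assume "v \<in> {v. (1 - t) * Cc r x v + t * x v \<noteq> 0}"
        then show "v \<in> Kverts W (replicate r W)" by (rule contrapos_pp) (simp add: Coff xf(2))
      qed
    next
      fix i assume i: "i < r" "Inr i \<in> {v. (1 - t) * Cc r x v + t * x v \<noteq> 0}"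
      have "sA r x > 0"
      proof (rule ccontr)
        assume "\<not> sA r x > 0"
        then have "sA r x = 0" using s0 by simp
        then have "\<forall>j\<in>{..<r}. x (Inr j) = 0" unfolding sA_def using xf(1) by (subst sum_nonneg_eq_0_iff[symmetric]) auto
        then show False using i \<open>sA r x = 0\<close> by (auto simp: Cc_def split: if_splits)
      qed
      then obtain w where "w \<in> W" "x (Inl w) = 0" using T_zero[OF x] by auto
      then show "\<exists>w\<in>W. Inl w \<notin> {v. (1 - t) * Cc r x v + t * x v \<noteq> 0}"
        by (intro bexI[of _ w]) (auto simp: Cc_def)
    qed
  qed
qed

lemma cont_f: "continuous_map (KN_space W (replicate r W)) (nsphere (n-1)) (fS e n)"
proof (rule cont_into_nsphere)
  fix p assume "p \<in> topspace (KN_space W (replicate r W))"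
  then show "fS e n p \<in> topspace (nsphere (n - 1))"
    using f_in by (simp add: KN_space_def topspace_geom)
next
  fix k
  show "continuous_map (KN_space W (replicate r W)) euclideanreal (\<lambda>p. fS e n p k)"
  proof (cases "k < n")
    case True
    have "continuous_map (KN_space W (replicate r W)) euclideanreal (\<lambda>p. (p (Inl (e k)) - beta n) / nu e n p)"
      unfolding nu_def KN_space_def
    proof (intro continuous_map_real_divide continuous_intros cont_coord)
      fix p assume "p \<in> topspace (geom_real (Kverts W (replicate r W)) (Kfaces W (replicate r W)))"
      then show "sqrt (\<Sum>k<n. (p (Inl (e k)) - beta n)^2) \<noteq> 0"
        using nu_pos[of p] by (simp add: topspace_geom nu_def)
    qed auto
    then show ?thesis using True by (simp add: fS_def)
  qed (simp add: fS_def)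
qed

lemma cont_mx: "continuous_map (nsphere (n-1)) euclideanreal (mx n)"
proof -
  have "continuous_map (nsphere (n-1)) euclideanreal (\<lambda>u. max (\<Sum>k<n. u k) (Max ((\<lambda>k. - u k) ` {..<n})))"
    using npos by (intro continuous_map_real_max continuous_map_sum cont_Max continuous_intros continuous_map_nsphere_projection) auto
  then show ?thesis by (simp add: mx_def[abs_def])
qed

lemma cont_g: "continuous_map (nsphere (n-1)) (KN_space W (replicate r W)) (gS W e n)"
  unfolding KN_space_def
proof (rule cont_into_geom)
  fix p assume "p \<in> topspace (nsphere (n-1))"
  then show "gS W e n p \<in> realization (Kverts W (replicate r W)) (Kfaces W (replicate r W))"
    using g_in by simp
next
  fix v
  have mxnz: "\<And>u. u \<in> topspace (nsphere (n-1)) \<Longrightarrow> mx n u \<noteq> 0" using mx_pos by force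
  show "continuous_map (nsphere (n - 1)) euclideanreal (\<lambda>p. gS W e n p v)"
  proof (cases v)
    case (Inl w)
    show ?thesis
    proof (cases "w \<in> W")
      case True
      have "continuous_map (nsphere (n - 1)) euclideanreal (\<lambda>u. (1 + u (inv_into {..<n} e w) / mx n u) / (real n + 1))"
        by (intro continuous_intros continuous_map_real_divide cont_mx continuous_map_nsphere_projection mxnz) auto
      then show ?thesis using True Inl by (simp add: gS_def)
    qed (simp add: gS_def Inl)
  next
    case (Inr i)
    show ?thesis
    proof (cases "i = 0")
      case True
      have "continuous_map (nsphere (n - 1)) euclideanreal (\<lambda>u. 1 - (\<Sum>k<n. (1 + u k / mx n u) / (real n + 1)))"
        by (intro continuous_intros continuous_map_sum continuous_map_real_divide cont_mx continuous_map_nsphere_projection mxnz) auto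
      then show ?thesis using True Inr by (simp add: gS_def)
    qed (simp add: gS_def Inr)
  qed
qed

lemma sphere_equiv: "KN_space W (replicate r W) homotopy_equivalent_space nsphere (n-1)"
  unfolding homotopy_equivalent_space_def
proof (intro exI conjI)
  show "continuous_map (KN_space W (replicate r W)) (nsphere (n-1)) (fS e n)" by (rule cont_f)
  show "continuous_map (nsphere (n-1)) (KN_space W (replicate r W)) (gS W e n)" by (rule cont_g)
  show "homotopic_with (\<lambda>x. True) (nsphere (n-1)) (nsphere (n-1)) (fS e n \<circ> gS W e n) id"
    by (rule homotopic_with_id2) (simp add: fg)
  show "homotopic_with (\<lambda>x. True) (KN_space W (replicate r W)) (KN_space W (replicate r W)) (gS W e n \<circ> fS e n) id"
  proof (rule homotopic_true_intro)
    show "continuous_map (prod_topology (top_of_set {0..1}) (KN_space W (replicate r W))) (KN_space W (replicate r W))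
       (\<lambda>p. \<lambda>v. (1 - fst p) * Cc r (snd p) v + fst p * snd p v)"
      unfolding KN_space_def
    proof (rule cont_into_geom)
      fix p assume "p \<in> topspace (prod_topology (top_of_set {0..1::real}) (geom_real (Kverts W (replicate r W)) (Kfaces W (replicate r W))))"
      then show "(\<lambda>v. (1 - fst p) * Cc r (snd p) v + fst p * snd p v) \<in> realization (Kverts W (replicate r W)) (Kfaces W (replicate r W))"
        using h_in by (auto simp: topspace_geom)
    next
      fix v
      have cC: "continuous_map (prod_topology (top_of_set {0..1::real}) (geom_real (Kverts W (replicate r W)) (Kfaces W (replicate r W)))) euclideanreal (\<lambda>p. Cc r (snd p) v)"
      proof (cases v)
        case (Inl w) then show ?thesis by (simp add: Cc_def cont_coord2)
      next
        case (Inr i) then show ?thesis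
          by (cases "i = 0") (simp_all add: Cc_def sA_cont cont_coord2)
      qed
      show "continuous_map (prod_topology (top_of_set {0..1::real}) (geom_real (Kverts W (replicate r W)) (Kfaces W (replicate r W)))) euclideanreal
         (\<lambda>p. (1 - fst p) * Cc r (snd p) v + fst p * snd p v)"
        by (intro continuous_intros cC cont_fst01 cont_coord2)
    qed
    show "(\<lambda>v. (1 - fst (0::real, x)) * Cc r (snd (0::real, x)) v + fst (0::real, x) * snd (0::real, x) v) = (gS W e n \<circ> fS e n) x"
      if "x \<in> topspace (KN_space W (replicate r W))" for x
      using gf[of x] that by (simp add: KN_space_def topspace_geom)
    show "(\<lambda>v. (1 - fst (1::real, x)) * Cc r (snd (1::real, x)) v + fst (1::real, x) * snd (1::real, x) v) = id x" for x
      by simp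
  qed
qed

end

lemma cont_empty: "topspace X = {} \<Longrightarrow> continuous_map X Y f"
  unfolding continuous_map_def by simp

lemma empty_case:
  assumes W: "W = {}" and NW: "\<forall>i<length N. N!i \<subseteq> W"
  shows "KN_space W N homotopy_equivalent_space sphere_top (int (card W) - 1)"
proof -
  have e1: "topspace (KN_space W N) = {}"
  proof (rule ccontr)
    assume "topspace (KN_space W N) \<noteq> {}"
    then obtain x where x: "x \<in> realization (Kverts W N) (Kfaces W N)" by (auto simp: KN_space_def topspace_geom)
    note xf = real_facts[OF x]
    obtain v where v: "v \<in> Kverts W N" "x v \<noteq> 0" using xf(3) by (metis sum.neutral zero_neq_one)
    then obtain i where i: "i < length N" "v = Inr i" using W by (auto simp: Kverts_def)
    have "Ntilde N i = {Inr i}" using NW i W by (auto simp: Ntilde_def)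
    then show False using xf(4) i v unfolding Kfaces_def by auto
  qed
  have e2: "topspace (sphere_top (int (card W) - 1)) = {}" using W by (simp add: sphere_top_def)
  show ?thesis
    unfolding homotopy_equivalent_space_def
    by (intro exI conjI homotopic_with_equal cont_empty) (simp_all add: e1 e2)
qed

lemma cone_case:
  fixes W :: "'w set" and N :: "'w set list"
  assumes fin: "finite W" and NW: "\<forall>i<length N. N!i \<subseteq> W" and U: "\<Union>(set N) \<noteq> W"
  shows "KN_space W N homotopy_equivalent_space subtopology euclideanreal {0}"
proof -
  have "\<Union>(set N) \<subseteq> W" using NW by (force simp: in_set_conv_nth)
  then obtain w0 where w0a: "w0 \<in> W" "w0 \<notin> \<Union>(set N)" using U by blast
  then have w0: "w0 \<in> W" "\<forall>i<length N. w0 \<notin> N!i" by (auto dest: nth_mem)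
  define e0 :: "'w + nat \<Rightarrow> real" where "e0 = (\<lambda>v. if v = Inl w0 then 1 else 0)"
  have w0V: "Inl w0 \<in> Kverts W N" using w0 by (simp add: Kverts_def)
  have e0R: "e0 \<in> realization (Kverts W N) (Kfaces W N)"
  proof (rule realizationI)
    show "0 \<le> e0 v" for v by (simp add: e0_def)
    show "e0 v = 0" if "v \<notin> Kverts W N" for v using that w0V by (auto simp: e0_def)
    show "sum e0 (Kverts W N) = 1" using w0V fin finite_Kverts[OF fin] by (simp add: e0_def sum.delta')
    have "{v. e0 v \<noteq> 0} = {Inl w0}" by (auto simp: e0_def)
    then show "{v. e0 v \<noteq> 0} \<in> Kfaces W N" using w0V by (auto simp: Kfaces_def Ntilde_def)
  qed
  have cone_in: "(\<lambda>v. (1 - t) * e0 v + t * x v) \<in> realization (Kverts W N) (Kfaces W N)"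
    if x: "x \<in> realization (Kverts W N) (Kfaces W N)" and t: "0 \<le> t" "t \<le> 1" for x t
  proof -
    note xf = real_facts[OF x]
    note ef = real_facts[OF e0R]
    show ?thesis
    proof (rule realizationI)
      show "0 \<le> (1 - t) * e0 v + t * x v" for v using xf(1) ef(1) t by simp
      show "(1 - t) * e0 v + t * x v = 0" if "v \<notin> Kverts W N" for v using xf(2) ef(2) that by simp
      show "(\<Sum>v\<in>Kverts W N. (1 - t) * e0 v + t * x v) = 1"
        using xf(3) ef(3) by (simp add: sum.distrib sum_distrib_left[symmetric])
      show "{v. (1 - t) * e0 v + t * x v \<noteq> 0} \<in> Kfaces W N"
        unfolding Kfaces_def
      proof (intro CollectI conjI allI impI)
        show "{v. (1 - t) * e0 v + t * x v \<noteq> 0} \<subseteq> Kverts W N"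
        proof
          fix v assume "v \<in> {v. (1 - t) * e0 v + t * x v \<noteq> 0}"
          then show "v \<in> Kverts W N" by (rule contrapos_pp) (simp add: xf(2) ef(2))
        qed
        fix i assume i: "i < length N"
        show "\<not> Ntilde N i \<subseteq> {v. (1 - t) * e0 v + t * x v \<noteq> 0}"
        proof
          assume sub: "Ntilde N i \<subseteq> {v. (1 - t) * e0 v + t * x v \<noteq> 0}"
          have "Ntilde N i \<subseteq> {v. x v \<noteq> 0}"
          proof
            fix v assume v: "v \<in> Ntilde N i"
            then have "v \<noteq> Inl w0" using w0 i by (auto simp: Ntilde_def)
            then show "v \<in> {v. x v \<noteq> 0}" using sub v by (auto simp: e0_def)
          qed
          then show False using xf(4) i unfolding Kfaces_def by auto
        qed
      qed
    qed
  qed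
  show ?thesis
    unfolding homotopy_equivalent_space_def
  proof (intro exI conjI)
    show "continuous_map (KN_space W N) (subtopology euclideanreal {0}) (\<lambda>x. 0::real)"
      by (simp add: continuous_map_in_subtopology)
    show "continuous_map (subtopology euclideanreal {0}) (KN_space W N) (\<lambda>_. e0)"
      using e0R by (simp add: KN_space_def topspace_geom)
    show "homotopic_with (\<lambda>x. True) (subtopology euclideanreal {0}) (subtopology euclideanreal {0}) ((\<lambda>x. 0::real) \<circ> (\<lambda>_. e0)) id"
      by (rule homotopic_with_id2) simp
    show "homotopic_with (\<lambda>x. True) (KN_space W N) (KN_space W N) ((\<lambda>_. e0) \<circ> (\<lambda>x. 0::real)) id"
    proof (rule homotopic_true_intro)
      show "continuous_map (prod_topology (top_of_set {0..1}) (KN_space W N)) (KN_space W N)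
         (\<lambda>p. \<lambda>v. (1 - fst p) * e0 v + fst p * snd p v)"
        unfolding KN_space_def
      proof (rule cont_into_geom)
        fix p assume "p \<in> topspace (prod_topology (top_of_set {0..1::real}) (geom_real (Kverts W N) (Kfaces W N)))"
        then show "(\<lambda>v. (1 - fst p) * e0 v + fst p * snd p v) \<in> realization (Kverts W N) (Kfaces W N)"
          using cone_in by (auto simp: topspace_geom)
      next
        fix v
        show "continuous_map (prod_topology (top_of_set {0..1::real}) (geom_real (Kverts W N) (Kfaces W N))) euclideanreal
           (\<lambda>p. (1 - fst p) * e0 v + fst p * snd p v)"
          by (intro continuous_intros cont_fst01 cont_coord2)
      qed
      show "(\<lambda>v. (1 - fst (0::real, x)) * e0 v + fst (0::real, x) * snd (0::real, x) v) = ((\<lambda>_. e0) \<circ> (\<lambda>x. 0::real)) x" for x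
        by simp
      show "(\<lambda>v. (1 - fst (1::real, x)) * e0 v + fst (1::real, x) * snd (1::real, x) v) = id x" for x
        by simp
    qed
  qed
qed

lemma hem_imp: "homotopy_equivalence_map X Y f \<Longrightarrow> X homotopy_equivalent_space Y"
  unfolding homotopy_equivalence_map_def homotopy_equivalent_space_def by blast

theorem proposition4p2:
  fixes W :: "'w set" and N M :: "'w set list"
  assumes "finite W" and "\<forall>i<length N. N ! i \<subseteq> W"
  shows "(\<Union>(set N) = W \<longrightarrow>
            KN_space W N homotopy_equivalent_space sphere_top (int (card W) - 1))
       \<and> (\<Union>(set N) \<noteq> W \<longrightarrow>
            KN_space W N homotopy_equivalent_space subtopology euclideanreal {0})
       \<and> ((length M = length N \<and> (\<forall>i<length N. M ! i \<subseteq> N ! i) \<and> \<Union>(set M) = W) \<longrightarrow>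
            topspace (KN_space W M) \<subseteq> topspace (KN_space W N)
            \<and> homotopy_equivalence_map (KN_space W M) (KN_space W N) id)"
proof -
  have P2: "\<Union>(set N) \<noteq> W \<longrightarrow> KN_space W N homotopy_equivalent_space subtopology euclideanreal {0}"
    using cone_case assms by blast
  have P3: "(length M = length N \<and> (\<forall>i<length N. M ! i \<subseteq> N ! i) \<and> \<Union>(set M) = W) \<longrightarrow>
      topspace (KN_space W M) \<subseteq> topspace (KN_space W N) \<and> homotopy_equivalence_map (KN_space W M) (KN_space W N) id"
    using incl_equiv[OF assms(1) _ _ assms(2)] by blast
  have P1: "KN_space W N homotopy_equivalent_space sphere_top (int (card W) - 1)" if U: "\<Union>(set N) = W"
  proof (cases "W = {}")
    case True then show ?thesis using empty_case assms(2) by blast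
  next
    case False
    define r where "r = length N"
    define n where "n = card W"
    have rpos: "r > 0" using U False by (cases N) (auto simp: r_def)
    have npos: "n > 0" using False assms(1) by (simp add: n_def card_gt_0_iff)
    obtain e where e: "bij_betw e {0..<n} W" using ex_bij_betw_nat_finite[OF assms(1)] by (auto simp: n_def)
    then have e': "bij_betw e {..<n} W" by (simp add: atLeast0LessThan)
    have "topspace (KN_space W N) \<subseteq> topspace (KN_space W (replicate r W)) \<and>
        homotopy_equivalence_map (KN_space W N) (KN_space W (replicate r W)) id"
      by (rule incl_equiv[OF assms(1)]) (use assms(2) U in \<open>auto simp: r_def\<close>)
    then have "KN_space W N homotopy_equivalent_space KN_space W (replicate r W)"
      using hem_imp by blast
    also have "KN_space W (replicate r W) homotopy_equivalent_space nsphere (n-1)"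
      by (rule sphere_equiv[OF assms(1) e' npos rpos])
    also have "nsphere (n-1) = sphere_top (int (card W) - 1)"
      using npos by (simp add: sphere_top_def n_def nat_diff_distrib)
    finally show ?thesis .
  qed
  show ?thesis using P1 P2 P3 by blast
qed

end
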